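(* Let $n\ge 2$ and let $\mathcal{A}$ be an antichain in $Q(P_n)$. Then there exists an antichain $\mathcal{A}'$ contained in \[ Q'(P_n)=\bigcup_{\frac{n-1}{4}<r<\frac{n+2}{3}} Q^{(r)}(P_n) \] with $|\mathcal{A}|\le|\mathcal{A}'|$.
   Context: $Q(P_n)$ is the family of subsets of $[n]=\{1,\dots,n\}$ containing no two consecutive integers, and $Q^{(r)}(P_n)$ its members of size $r$ (the union is over integers $r$). An antichain is a subfamily in which no member is a proper subset of another. *)

theory Defs
  imports Complex_Main
begin

definition Q :: "nat \<Rightarrow> nat set set" where
  "Q n = {S. S \<subseteq> {1..n} \<and> (\<forall>i\<in>S. Suc i \<notin> S)}"

definition Q_level :: "nat \<Rightarrow> nat \<Rightarrow> nat set set" where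
  "Q_level n r = {S \<in> Q n. card S = r}"

definition Q' :: "nat \<Rightarrow> nat set set" where
  "Q' n = (\<Union>r\<in>{r::nat. (real n - 1) / 4 < real r \<and> real r < (real n + 2) / 3}. Q_level n r)"

definition antichain_fam :: "'a set set \<Rightarrow> bool" where
  "antichain_fam F \<longleftrightarrow> (\<forall>A\<in>F. \<forall>B\<in>F. \<not> A \<subset> B)"

end

theory Submission
  imports Defs
begin

definition free :: "nat \<Rightarrow> nat set \<Rightarrow> nat set" where
  "free n a = {x\<in>{1..n}. x \<notin> a \<and> Suc x \<notin> a \<and> (\<forall>y\<in>a. Suc y \<noteq> x)}"

lemma Q_finite: "finite (Q n)"
  by (rule finite_subset[of _ "Pow {1..n}"]) (auto simp: Q_def)

lemma Q_elem_finite: "a \<in> Q n \<Longrightarrow> finite a"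
  by (rule finite_subset[of _ "{1..n}"]) (auto simp: Q_def)

lemma Q_subset: "a \<in> Q n \<Longrightarrow> b \<subseteq> a \<Longrightarrow> b \<in> Q n"
  by (auto simp: Q_def)

lemma Q_insert: "a \<in> Q n \<Longrightarrow> x \<in> free n a \<Longrightarrow> insert x a \<in> Q n"
  by (auto simp: Q_def free_def)

lemma free_finite: "finite (free n a)"
  by (rule finite_subset[of _ "{1..n}"]) (auto simp: free_def)

lemma fiber_bound:
  assumes "finite P" "\<And>y. y \<in> g ` P \<Longrightarrow> card {p\<in>P. g p = y} \<le> k"
  shows "card P \<le> k * card (g ` P)"
proof -
  have "card P = card (\<Union>y\<in>g`P. {p\<in>P. g p = y})" by (rule arg_cong[where f=card]) auto
  also have "\<dots> \<le> (\<Sum>y\<in>g`P. card {p\<in>P. g p = y})" by (rule card_UN_le) (use assms in auto)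
  also have "\<dots> \<le> (\<Sum>y\<in>g`P. k)" by (rule sum_mono) (use assms in auto)
  also have "\<dots> = k * card (g`P)" by simp
  finally show ?thesis .
qed

lemma free_lower:
  assumes "a \<in> Q n" "card a = r"
  shows "n - 3*r \<le> card (free n a)"
proof -
  let ?B = "a \<union> Suc ` a \<union> (\<lambda>y. y - 1) ` a"
  have fa: "finite a" using assms Q_elem_finite by auto
  have "card ?B \<le> card (a \<union> Suc`a) + card ((\<lambda>y. y-1)`a)" by (rule card_Un_le)
  also have "\<dots> \<le> card a + card (Suc`a) + card ((\<lambda>y. y-1)`a)" using card_Un_le by simp
  also have "\<dots> \<le> r + r + r" using card_image_le[OF fa, of Suc] card_image_le[OF fa, of "\<lambda>y. y-1"] assms by simp
  finally have cB: "card ?B \<le> 3*r" by simp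
  have sub: "{1..n} - ?B \<subseteq> free n a"
  proof
    fix x assume x: "x \<in> {1..n} - ?B"
    have "Suc x \<notin> a"
    proof
      assume "Suc x \<in> a" then have "Suc x - 1 \<in> (\<lambda>y. y - 1) ` a" by blast
      with x show False by simp
    qed
    with x show "x \<in> free n a" by (auto simp: free_def)
  qed
  have "card {1..n} \<le> card (({1..n} - ?B) \<union> ?B)" by (rule card_mono) (use fa in auto)
  also have "\<dots> \<le> card ({1..n} - ?B) + card ?B" by (rule card_Un_le)
  finally have "n \<le> card ({1..n} - ?B) + 3*r" using cB by simp
  moreover have "card ({1..n} - ?B) \<le> card (free n a)" by (rule card_mono[OF free_finite sub])
  ultimately show ?thesis by simp
qed

lemma up_key:
  assumes X: "X \<subseteq> Q n" "\<forall>a\<in>X. card a = r" and nr: "4*r+1 \<le> n"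
  shows "card X \<le> card {b\<in>Q n. \<exists>a\<in>X. a \<subseteq> b \<and> card b = Suc r}"
proof -
  define U where "U = {b\<in>Q n. \<exists>a\<in>X. a \<subseteq> b \<and> card b = Suc r}"
  define P where "P = Sigma X (free n)"
  define g :: "nat set \<times> nat \<Rightarrow> nat set" where "g = (\<lambda>(a, x). insert x a)"
  have fX: "finite X" using X(1) Q_finite finite_subset by blast
  have fP: "finite P" unfolding P_def using fX free_finite by auto
  have cP: "card P = (\<Sum>a\<in>X. card (free n a))" unfolding P_def using fX free_finite by simp
  have "(\<Sum>a\<in>X. Suc r) \<le> (\<Sum>a\<in>X. card (free n a))"
  proof (rule sum_mono)
    fix a assume "a \<in> X"
    then have "n - 3*r \<le> card (free n a)" using free_lower X by blast
    then show "Suc r \<le> card (free n a)" using nr by simp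
  qed
  hence 1: "Suc r * card X \<le> card P" using cP by (simp add: mult.commute)
  have img: "g ` P \<subseteq> U"
  proof
    fix b assume "b \<in> g ` P"
    then obtain a x where ax: "a \<in> X" "x \<in> free n a" "b = insert x a" by (auto simp: P_def g_def)
    have "finite a" using ax X Q_elem_finite by blast
    moreover have "x \<notin> a" using ax by (auto simp: free_def)
    ultimately have "card b = Suc r" using ax X by simp
    moreover have "b \<in> Q n" using Q_insert ax X by blast
    ultimately show "b \<in> U" using ax unfolding U_def by blast
  qed
  have fib: "card {p\<in>P. g p = b} \<le> Suc r" if b: "b \<in> g ` P" for b
  proof -
    have cb: "card b = Suc r" using b img U_def by auto
    have fb: "finite b" using cb card_ge_0_finite by force
    have "inj_on snd {p\<in>P. g p = b}"
    proof (rule inj_onI)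
      fix p q assume p: "p \<in> {p\<in>P. g p = b}" and q: "q \<in> {p\<in>P. g p = b}" and e: "snd p = snd q"
      obtain a x where pa: "p = (a,x)" by (cases p)
      obtain a' x' where qa: "q = (a',x')" by (cases q)
      have "x \<notin> a" "x' \<notin> a'" using p q pa qa by (auto simp: P_def free_def)
      moreover have "insert x a = b" "insert x' a' = b" using p q pa qa by (auto simp: g_def)
      ultimately have "a = b - {x}" "a' = b - {x'}" by auto
      then show "p = q" using pa qa e by simp
    qed
    moreover have "snd ` {p\<in>P. g p = b} \<subseteq> b" by (auto simp: g_def)
    ultimately have "card {p\<in>P. g p = b} \<le> card b" using card_inj_on_le fb by blast
    then show ?thesis using cb by simp
  qed
  have "card P \<le> Suc r * card (g`P)" by (rule fiber_bound[OF fP fib])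
  also have "\<dots> \<le> Suc r * card U"
    using card_mono[OF _ img] Q_finite finite_subset unfolding U_def by (metis (no_types, lifting) mem_Collect_eq mult_le_mono2 subsetI)
  finally have "Suc r * card X \<le> Suc r * card U" using 1 by linarith
  then have "card X \<le> card U" by (simp only: Suc_mult_le_cancel1)
  then show ?thesis unfolding U_def .
qed


lemma free_upper:
  assumes b: "b \<in> Q n" "card b = k" "1 \<le> k" "n \<le> 3*k+1"
  shows "card (free n b) \<le> Suc k"
proof -
  have fb: "finite b" using b Q_elem_finite by blast
  let ?B = "b \<union> Suc ` b"
  have disj: "b \<inter> Suc`b = {}" using b(1) by (auto simp: Q_def)
  have cB: "card ?B = 2*k"
    using card_Un_disjoint[of b "Suc`b"] fb disj card_image[of Suc b] b(2) by simp
  have Bsub: "?B \<subseteq> {1..Suc n}" using b(1) by (auto simp: Q_def)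
  have fB: "finite ?B" using fb by simp
  have fsub: "free n b \<subseteq> {1..Suc n} - ?B" by (auto simp: free_def)
  have cD: "card ({1..Suc n} - ?B) = Suc n - 2*k" using card_Diff_subset[OF fB Bsub] cB by simp
  show ?thesis
  proof (cases "n \<le> 3*k")
    case True then show ?thesis using card_mono[OF _ fsub] cD by simp
  next
    case False hence n: "n = 3*k+1" using b by simp
    show ?thesis
    proof (cases "n \<in> b")
      case False
      have s1: "free n b \<subseteq> ({1..Suc n} - ?B) - {Suc n}" by (auto simp: free_def)
      have "Suc n \<notin> b" using b(1) by (auto simp: Q_def)
      hence "Suc n \<in> {1..Suc n} - ?B" using False by auto
      hence "card (({1..Suc n} - ?B) - {Suc n}) = Suc n - 2*k - 1" using cD by simp
      then show ?thesis using card_mono[OF _ s1] n by simp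
    next
      case True
      show ?thesis
      proof (cases "\<exists>t\<in>b. 2 \<le> t \<and> t - 2 \<notin> b")
        case True
        then obtain t where t: "t \<in> b" "2 \<le> t" "t - 2 \<notin> b" by blast
        have "t \<le> n" using t b(1) by (auto simp: Q_def)
        have "t - 1 \<notin> b" using t b(1) unfolding Q_def
          by (metis (no_types, lifting) Suc_diff_1 le_zero_eq mem_Collect_eq not_less_eq_eq zero_less_iff_neq_zero one_le_numeral order_trans)
        moreover have "t - 1 \<notin> Suc ` b"
        proof
          assume "t - 1 \<in> Suc ` b" then obtain y where "y \<in> b" "t - 1 = Suc y" by blast
          then have "y = t - 2" by simp
          with \<open>y \<in> b\<close> t show False by simp
        qed
        ultimately have tin: "t - 1 \<in> {1..Suc n} - ?B" using t \<open>t \<le> n\<close> by auto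
        have s1: "free n b \<subseteq> ({1..Suc n} - ?B) - {t - 1}"
          using fsub t by (auto simp: free_def)
        have "card (({1..Suc n} - ?B) - {t - 1}) = Suc n - 2*k - 1" using cD tin by simp
        then show ?thesis using card_mono[OF _ s1] n by simp
      next
        case False
        have all: "\<forall>t\<in>b. 2 \<le> t \<longrightarrow> t - 2 \<in> b" using False by blast
        have mem: "2*j < n \<Longrightarrow> n - 2*j \<in> b" for j
        proof (induction j)
          case 0 then show ?case using \<open>n \<in> b\<close> by simp
        next
          case (Suc j)
          then have "n - 2*j \<in> b" by simp
          moreover have "2 \<le> n - 2*j" using Suc.prems by simp
          ultimately have "n - 2*j - 2 \<in> b" using all by blast
          then show ?case by (simp add: diff_diff_add)
        qed
        have isub: "(\<lambda>j. n - 2*j) ` {..<(n+1) div 2} \<subseteq> b" using mem by auto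
        have inj: "inj_on (\<lambda>j. n - 2*j) {..<(n+1) div 2}"
          by (rule inj_onI) auto
        have "card {..<(n+1) div 2} \<le> card b" using card_inj_on_le[OF inj isub fb] .
        then have "(n+1) div 2 \<le> k" using b(2) by simp
        then show ?thesis using n by simp
      qed
    qed
  qed
qed

lemma down_key:
  assumes X: "X \<subseteq> Q n" "\<forall>a\<in>X. card a = r" and nr: "n+2 \<le> 3*r" and n2: "2 \<le> n"
  shows "card X \<le> card {b. \<exists>a\<in>X. b \<subseteq> a \<and> Suc (card b) = r}"
proof -
  define D where "D = {b. \<exists>a\<in>X. b \<subseteq> a \<and> Suc (card b) = r}"
  define P where "P = Sigma X (\<lambda>a. a)"
  define g :: "nat set \<times> nat \<Rightarrow> nat set" where "g = (\<lambda>(a, x). a - {x})"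
  have fX: "finite X" using X(1) Q_finite finite_subset by blast
  have fa: "\<And>a. a \<in> X \<Longrightarrow> finite a" using X Q_elem_finite by blast
  have fP: "finite P" unfolding P_def using fX fa by auto
  have cP: "card P = (\<Sum>a\<in>X. card a)" unfolding P_def using fX fa by simp
  hence 1: "r * card X \<le> card P" using X(2) by (simp add: mult.commute)
  have r2: "2 \<le> r" using nr n2 by simp
  have img: "g ` P \<subseteq> D"
  proof
    fix b assume "b \<in> g ` P"
    then obtain a x where ax: "a \<in> X" "x \<in> a" "b = a - {x}" by (auto simp: P_def g_def)
    have "card b = card a - 1" using ax fa by simp
    then have "Suc (card b) = r" using ax X r2 by simp
    then show "b \<in> D" using ax unfolding D_def by blast
  qed
  have fD: "finite D"
    by (rule finite_subset[OF _ Q_finite[of n]]) (use X in \<open>auto simp: D_def intro: Q_subset\<close>)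
  have fib: "card {p\<in>P. g p = b} \<le> r" if b: "b \<in> g ` P" for b
  proof -
    obtain a x where ax: "a \<in> X" "x \<in> a" "b = a - {x}" using b by (auto simp: P_def g_def)
    have cb: "Suc (card b) = r" using b img D_def by auto
    have bQ: "b \<in> Q n" using ax X Q_subset by blast
    have "inj_on snd {p\<in>P. g p = b}"
    proof (rule inj_onI)
      fix p q assume p: "p \<in> {p\<in>P. g p = b}" and q: "q \<in> {p\<in>P. g p = b}" and e: "snd p = snd q"
      obtain a x where pa: "p = (a,x)" by (cases p)
      obtain a' x' where qa: "q = (a',x')" by (cases q)
      have "x \<in> a" "x' \<in> a'" using p q pa qa by (auto simp: P_def)
      moreover have "a - {x} = b" "a' - {x'} = b" using p q pa qa by (auto simp: g_def)
      ultimately have "a = insert x b" "a' = insert x' b" by auto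
      then show "p = q" using pa qa e by simp
    qed
    moreover have "snd ` {p\<in>P. g p = b} \<subseteq> free n b"
    proof
      fix x assume "x \<in> snd ` {p\<in>P. g p = b}"
      then obtain a where a: "a \<in> X" "x \<in> a" "a - {x} = b" by (auto simp: P_def g_def)
      have aQ: "a \<in> Q n" using a X by blast
      have "Suc x \<notin> b" using aQ a by (auto simp: Q_def)
      moreover have "\<forall>y\<in>b. Suc y \<noteq> x" using aQ a by (auto simp: Q_def)
      moreover have "x \<in> {1..n}" using aQ a by (auto simp: Q_def)
      ultimately show "x \<in> free n b" using a by (auto simp: free_def)
    qed
    ultimately have "card {p\<in>P. g p = b} \<le> card (free n b)" using card_inj_on_le free_finite by blast
    also have "\<dots> \<le> Suc (card b)" by (rule free_upper[OF bQ refl]) (use cb nr r2 in auto)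
    finally show ?thesis using cb by simp
  qed
  have "card P \<le> r * card (g`P)" by (rule fiber_bound[OF fP fib])
  also have "\<dots> \<le> r * card D" using card_mono[OF fD img] by simp
  finally have "r * card X \<le> r * card D" using 1 by linarith
  then have "card X \<le> card D" using r2 by simp
  then show ?thesis unfolding D_def .
qed


lemma Q_card_le: "a \<in> Q n \<Longrightarrow> card a \<le> n"
  using card_mono[of "{1..n}" a] by (auto simp: Q_def)

lemma up_step:
  assumes AQ: "A \<subseteq> Q n" and ac: "antichain_fam A" and nr: "4*r+1 \<le> n" and ge: "\<forall>a\<in>A. r \<le> card a"
  shows "\<exists>A'. A' \<subseteq> Q n \<and> antichain_fam A' \<and> card A \<le> card A' \<and> (\<forall>a\<in>A'. Suc r \<le> card a)"
proof -
  define X where "X = {a\<in>A. card a = r}"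
  define U where "U = {b\<in>Q n. \<exists>a\<in>X. a \<subseteq> b \<and> card b = Suc r}"
  define A' where "A' = (A - X) \<union> U"
  have fA: "finite A" using AQ Q_finite finite_subset by blast
  have fU: "finite U" unfolding U_def using Q_finite by simp
  have XA: "X \<subseteq> A" unfolding X_def by auto
  have XU: "card X \<le> card U" unfolding U_def by (rule up_key[OF _ _ nr]) (use AQ in \<open>auto simp: X_def\<close>)
  have fin: "\<And>a. a \<in> Q n \<Longrightarrow> finite a" using Q_elem_finite by blast
  have disj: "(A - X) \<inter> U = {}"
  proof (rule ccontr)
    assume "(A - X) \<inter> U \<noteq> {}"
    then obtain b a where b: "b \<in> A" "a \<in> X" "a \<subseteq> b" "card b = Suc r" by (auto simp: U_def)
    then have "a \<noteq> b" "a \<in> A" by (auto simp: X_def)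
    with b ac show False unfolding antichain_fam_def by blast
  qed
  have "card A' = card (A - X) + card U" unfolding A'_def using disj fA fU by (simp add: card_Un_disjoint)
  moreover have "card (A - X) = card A - card X" using card_Diff_subset[OF _ XA] fA finite_subset[OF XA] by simp
  moreover have "card X \<le> card A" using card_mono[OF fA XA] .
  ultimately have card: "card A \<le> card A'" using XU by linarith
  have sub: "A' \<subseteq> Q n" unfolding A'_def U_def using AQ by auto
  have anti: "antichain_fam A'"
    unfolding antichain_fam_def
  proof (intro ballI notI)
    fix c d assume c: "c \<in> A'" and d: "d \<in> A'" and cd: "c \<subset> d"
    have fd: "finite d" using d sub fin by blast
    have ccard: "card c < card d" using psubset_card_mono[OF fd cd] .
    show False
    proof (cases "c \<in> U")
      case True
      then obtain a where a: "a \<in> X" "a \<subseteq> c" "card c = Suc r" by (auto simp: U_def)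
      show False
      proof (cases "d \<in> U")
        case True then show False using a ccard by (auto simp: U_def)
      next
        case False then have "d \<in> A" using d by (auto simp: A'_def)
        moreover have "a \<subset> d" using a cd by blast
        ultimately show False using ac a XA unfolding antichain_fam_def by blast
      qed
    next
      case False then have cA: "c \<in> A" "c \<notin> X" using c by (auto simp: A'_def)
      show False
      proof (cases "d \<in> U")
        case True then have "card d = Suc r" by (auto simp: U_def)
        then show False using ccard ge cA by (auto simp: X_def)
      next
        case False then have "d \<in> A" using d by (auto simp: A'_def)
        then show False using cA cd ac unfolding antichain_fam_def by blast
      qed
    qed
  qed
  have "\<forall>a\<in>A'. Suc r \<le> card a" unfolding A'_def U_def X_def using ge by force
  then show ?thesis using sub anti card by blast
qed

lemma down_step:
  assumes AQ: "A \<subseteq> Q n" and ac: "antichain_fam A" and nr: "n+2 \<le> 3*r" and n2: "2 \<le> n"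
    and le: "\<forall>a\<in>A. card a \<le> r" and low: "\<forall>a\<in>A. n \<le> 4 * card a"
  shows "\<exists>A'. A' \<subseteq> Q n \<and> antichain_fam A' \<and> card A \<le> card A' \<and> (\<forall>a\<in>A'. card a \<le> r - 1)
     \<and> (\<forall>a\<in>A'. n \<le> 4 * card a)"
proof -
  define X where "X = {a\<in>A. card a = r}"
  define D where "D = {b. \<exists>a\<in>X. b \<subseteq> a \<and> Suc (card b) = r}"
  define A' where "A' = (A - X) \<union> D"
  have fA: "finite A" using AQ Q_finite finite_subset by blast
  have XA: "X \<subseteq> A" unfolding X_def by auto
  have DQ: "D \<subseteq> Q n" unfolding D_def X_def using AQ Q_subset by blast
  have fD: "finite D" using DQ Q_finite finite_subset by blast
  have XD: "card X \<le> card D" unfolding D_def by (rule down_key[OF _ _ nr n2]) (use AQ in \<open>auto simp: X_def\<close>)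
  have fin: "\<And>a. a \<in> Q n \<Longrightarrow> finite a" using Q_elem_finite by blast
  have disj: "(A - X) \<inter> D = {}"
  proof (rule ccontr)
    assume "(A - X) \<inter> D \<noteq> {}"
    then obtain b a where b: "b \<in> A" "a \<in> X" "b \<subseteq> a" "Suc (card b) = r" by (auto simp: D_def)
    then have "a \<noteq> b" "a \<in> A" by (auto simp: X_def)
    with b ac show False unfolding antichain_fam_def by blast
  qed
  have "card A' = card (A - X) + card D" unfolding A'_def using disj fA fD by (simp add: card_Un_disjoint)
  moreover have "card (A - X) = card A - card X" using card_Diff_subset[OF _ XA] fA finite_subset[OF XA] by simp
  moreover have "card X \<le> card A" using card_mono[OF fA XA] .
  ultimately have card: "card A \<le> card A'" using XD by linarith
  have sub: "A' \<subseteq> Q n" unfolding A'_def using AQ DQ by auto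
  have anti: "antichain_fam A'"
    unfolding antichain_fam_def
  proof (intro ballI notI)
    fix c d assume c: "c \<in> A'" and d: "d \<in> A'" and cd: "c \<subset> d"
    have fd: "finite d" using d sub fin by blast
    have ccard: "card c < card d" using psubset_card_mono[OF fd cd] .
    show False
    proof (cases "d \<in> D")
      case True
      then obtain a where a: "a \<in> X" "d \<subseteq> a" "Suc (card d) = r" by (auto simp: D_def)
      show False
      proof (cases "c \<in> D")
        case True then show False using a ccard by (auto simp: D_def)
      next
        case False then have "c \<in> A" using c by (auto simp: A'_def)
        moreover have "c \<subset> a" using a cd by blast
        ultimately show False using ac a XA unfolding antichain_fam_def by blast
      qed
    next
      case False then have dA: "d \<in> A" "d \<notin> X" using d by (auto simp: A'_def)
      show False
      proof (cases "c \<in> D")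
        case True then have "Suc (card c) = r" by (auto simp: D_def)
        then show False using ccard le dA by (auto simp: X_def)
      next
        case False then have "c \<in> A" using c by (auto simp: A'_def)
        then show False using dA cd ac unfolding antichain_fam_def by blast
      qed
    qed
  qed
  have "\<forall>a\<in>A'. card a \<le> r - 1" unfolding A'_def D_def X_def using le by force
  moreover have "\<forall>a\<in>D. n \<le> 4 * card a" using nr n2 unfolding D_def by auto
  then have "\<forall>a\<in>A'. n \<le> 4 * card a" using low unfolding A'_def by auto
  ultimately show ?thesis using sub anti card by blast
qed

lemma phase_up:
  "\<forall>A. A \<subseteq> Q n \<and> antichain_fam A \<and> (\<forall>a\<in>A. n - d \<le> card a) \<longrightarrow>
     (\<exists>A'. A' \<subseteq> Q n \<and> antichain_fam A' \<and> card A \<le> card A' \<and> (\<forall>a\<in>A'. n \<le> 4 * card a))"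
proof (induction d)
  case 0
  show ?case
  proof (intro allI impI)
    fix A assume A: "A \<subseteq> Q n \<and> antichain_fam A \<and> (\<forall>a\<in>A. n - 0 \<le> card a)"
    then have "\<forall>a\<in>A. n \<le> 4 * card a" by auto
    with A show "\<exists>A'. A' \<subseteq> Q n \<and> antichain_fam A' \<and> card A \<le> card A' \<and> (\<forall>a\<in>A'. n \<le> 4 * card a)"
      by blast
  qed
next
  case (Suc d)
  show ?case
  proof (intro allI impI)
    fix A assume A: "A \<subseteq> Q n \<and> antichain_fam A \<and> (\<forall>a\<in>A. n - Suc d \<le> card a)"
    then have AQ: "A \<subseteq> Q n" and Aa: "antichain_fam A" and Ag: "\<forall>a\<in>A. n - Suc d \<le> card a" by auto
    show "\<exists>A'. A' \<subseteq> Q n \<and> antichain_fam A' \<and> card A \<le> card A' \<and> (\<forall>a\<in>A'. n \<le> 4 * card a)"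
    proof (cases "4 * (n - Suc d) + 1 \<le> n")
      case True
      obtain A1 where A1: "A1 \<subseteq> Q n" "antichain_fam A1" "card A \<le> card A1" "\<forall>a\<in>A1. Suc (n - Suc d) \<le> card a"
        using up_step[OF AQ Aa True Ag] by blast
      have "\<forall>a\<in>A1. n - d \<le> card a"
      proof
        fix a assume "a \<in> A1" then have "Suc (n - Suc d) \<le> card a" using A1(4) by blast
        then show "n - d \<le> card a" by linarith
      qed
      then have "A1 \<subseteq> Q n \<and> antichain_fam A1 \<and> (\<forall>a\<in>A1. n - d \<le> card a)" using A1 by blast
      then have "\<exists>A'. A' \<subseteq> Q n \<and> antichain_fam A' \<and> card A1 \<le> card A' \<and> (\<forall>a\<in>A'. n \<le> 4 * card a)"
        by (rule Suc.IH[rule_format])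
      then obtain A2 where A2: "A2 \<subseteq> Q n" "antichain_fam A2" "card A1 \<le> card A2" "\<forall>a\<in>A2. n \<le> 4 * card a"
        by blast
      have "card A \<le> card A2" using A1(3) A2(3) by linarith
      then show ?thesis using A2 by blast
    next
      case False
      have "\<forall>a\<in>A. n \<le> 4 * card a"
      proof
        fix a assume "a \<in> A" then have "n - Suc d \<le> card a" using Ag by blast
        then show "n \<le> 4 * card a" using False by linarith
      qed
      then show ?thesis using AQ Aa by blast
    qed
  qed
qed

lemma phase_down:
  assumes n2: "2 \<le> n"
  shows "\<forall>A. A \<subseteq> Q n \<and> antichain_fam A \<and> (\<forall>a\<in>A. n \<le> 4 * card a) \<and> (\<forall>a\<in>A. card a \<le> (n+1) div 3 + d) \<longrightarrow>
     (\<exists>A'. A' \<subseteq> Q n \<and> antichain_fam A' \<and> card A \<le> card A' \<and> (\<forall>a\<in>A'. n \<le> 4 * card a \<and> 3 * card a < n + 2))"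
proof (induction d)
  case 0
  show ?case
  proof (intro allI impI)
    fix A assume A: "A \<subseteq> Q n \<and> antichain_fam A \<and> (\<forall>a\<in>A. n \<le> 4 * card a) \<and> (\<forall>a\<in>A. card a \<le> (n+1) div 3 + 0)"
    have h: "3 * ((n+1) div 3) \<le> n + 1" using div_times_less_eq_dividend[of "n+1" 3] by (simp add: mult.commute)
    have "\<forall>a\<in>A. 3 * card a < n + 2"
    proof
      fix a assume "a \<in> A" then have "card a \<le> (n+1) div 3" using A by auto
      then show "3 * card a < n + 2" using h by linarith
    qed
    then show "\<exists>A'. A' \<subseteq> Q n \<and> antichain_fam A' \<and> card A \<le> card A' \<and> (\<forall>a\<in>A'. n \<le> 4 * card a \<and> 3 * card a < n + 2)"
      using A by blast
  qed
next
  case (Suc d)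
  show ?case
  proof (intro allI impI)
    fix A assume A: "A \<subseteq> Q n \<and> antichain_fam A \<and> (\<forall>a\<in>A. n \<le> 4 * card a) \<and> (\<forall>a\<in>A. card a \<le> (n+1) div 3 + Suc d)"
    then have AQ: "A \<subseteq> Q n" and Aa: "antichain_fam A" and Al: "\<forall>a\<in>A. n \<le> 4 * card a"
      and Ag: "\<forall>a\<in>A. card a \<le> (n+1) div 3 + Suc d" by auto
    show "\<exists>A'. A' \<subseteq> Q n \<and> antichain_fam A' \<and> card A \<le> card A' \<and> (\<forall>a\<in>A'. n \<le> 4 * card a \<and> 3 * card a < n + 2)"
    proof (cases "n + 2 \<le> 3 * ((n+1) div 3 + Suc d)")
      case True
      obtain A1 where A1: "A1 \<subseteq> Q n" "antichain_fam A1" "card A \<le> card A1"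
          "\<forall>a\<in>A1. card a \<le> (n+1) div 3 + Suc d - 1" "\<forall>a\<in>A1. n \<le> 4 * card a"
        using down_step[OF AQ Aa True n2 Ag Al] by blast
      have "\<forall>a\<in>A1. card a \<le> (n+1) div 3 + d" using A1(4) by simp
      then have "A1 \<subseteq> Q n \<and> antichain_fam A1 \<and> (\<forall>a\<in>A1. n \<le> 4 * card a) \<and> (\<forall>a\<in>A1. card a \<le> (n+1) div 3 + d)"
        using A1 by blast
      then have "\<exists>A'. A' \<subseteq> Q n \<and> antichain_fam A' \<and> card A1 \<le> card A' \<and> (\<forall>a\<in>A'. n \<le> 4 * card a \<and> 3 * card a < n + 2)"
        by (rule Suc.IH[rule_format])
      then obtain A2 where A2: "A2 \<subseteq> Q n" "antichain_fam A2" "card A1 \<le> card A2" "\<forall>a\<in>A2. n \<le> 4 * card a \<and> 3 * card a < n + 2"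
        by blast
      have "card A \<le> card A2" using A1(3) A2(3) by linarith
      then show ?thesis using A2 by blast
    next
      case False
      have "\<forall>a\<in>A. n \<le> 4 * card a \<and> 3 * card a < n + 2"
      proof
        fix a assume "a \<in> A" then have "card a \<le> (n+1) div 3 + Suc d" "n \<le> 4 * card a" using Ag Al by auto
        then have "3 * card a \<le> 3 * ((n+1) div 3 + Suc d)" "n \<le> 4 * card a" by simp_all
        then show "n \<le> 4 * card a \<and> 3 * card a < n + 2" using False by linarith
      qed
      then show ?thesis using AQ Aa by blast
    qed
  qed
qed

theorem mainTheorem11:
  fixes n :: nat and A :: "nat set set"
  assumes "n \<ge> 2" and "A \<subseteq> Q n" and "antichain_fam A"
  shows "\<exists>A'. A' \<subseteq> Q' n \<and> antichain_fam A' \<and> card A \<le> card A'"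
proof -
  have "A \<subseteq> Q n \<and> antichain_fam A \<and> (\<forall>a\<in>A. n - n \<le> card a)" using assms by simp
  then have "\<exists>A'. A' \<subseteq> Q n \<and> antichain_fam A' \<and> card A \<le> card A' \<and> (\<forall>a\<in>A'. n \<le> 4 * card a)"
    by (rule phase_up[rule_format])
  then obtain A1 where A1: "A1 \<subseteq> Q n" "antichain_fam A1" "card A \<le> card A1" "\<forall>a\<in>A1. n \<le> 4 * card a"
    by blast
  have "\<forall>a\<in>A1. card a \<le> (n+1) div 3 + n" using A1(1) Q_card_le by fastforce
  then have "A1 \<subseteq> Q n \<and> antichain_fam A1 \<and> (\<forall>a\<in>A1. n \<le> 4 * card a) \<and> (\<forall>a\<in>A1. card a \<le> (n+1) div 3 + n)"
    using A1 by blast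
  then have "\<exists>A'. A' \<subseteq> Q n \<and> antichain_fam A' \<and> card A1 \<le> card A' \<and> (\<forall>a\<in>A'. n \<le> 4 * card a \<and> 3 * card a < n + 2)"
    by (rule phase_down[OF assms(1), rule_format])
  then obtain A2 where A2: "A2 \<subseteq> Q n" "antichain_fam A2" "card A1 \<le> card A2"
      "\<forall>a\<in>A2. n \<le> 4 * card a \<and> 3 * card a < n + 2"
    by blast
  have "A2 \<subseteq> Q' n"
  proof
    fix a assume a: "a \<in> A2"
    then have c1: "n \<le> 4 * card a" and c2: "3 * card a < n + 2" using A2 by auto
    have r1: "real n \<le> 4 * real (card a)" using c1 by (metis of_nat_le_iff of_nat_mult of_nat_numeral)
    have r2: "3 * real (card a) < real n + 2" using c2 by (metis of_nat_less_iff of_nat_mult of_nat_numeral of_nat_add)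
    have "(real n - 1) / 4 < real (card a) \<and> real (card a) < (real n + 2) / 3" using r1 r2 by simp
    moreover have "a \<in> Q_level n (card a)" using a A2 by (auto simp: Q_level_def)
    ultimately show "a \<in> Q' n" unfolding Q'_def by blast
  qed
  moreover have "card A \<le> card A2" using A1(3) A2(3) by linarith
  ultimately show ?thesis using A2 by blast
qed

end
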